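(* For $n\ge 2$, let $Q_n$ be the $n$-dimensional hypercube graph and let $c_1(Q_n)$ be the largest invariant factor (the exponent) of its sandpile group $K(Q_n)$. Then $$v_2(c_1(Q_n))=\max\Big\{\max_{1\le x<n}\{v_2(x)+x\},\; v_2(n)+n-1\Big\}.$$
   Context: $Q_n$ is the graph with vertex set $\mathbb{F}_2^n$ in which $u,w$ are adjacent iff they differ in exactly one coordinate. Its Laplacian is $L=D-A$ ($D$ the degree matrix, $A$ the adjacency matrix), and $\operatorname{coker}(L:\mathbb{Z}^{2^n}\to\mathbb{Z}^{2^n})\cong\mathbb{Z}\oplus K(Q_n)$ with $K(Q_n)$ a finite abelian group (the sandpile group). $v_2(x)$ denotes the exponent of the largest power of $2$ dividing the integer $x$. *)

theory Defs
  imports Main "HOL-Computational_Algebra.Primes"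
begin

text \<open>Vertices of Q_n: elements of F_2^n, encoded as subsets of {0..<n}
  (indicator sets of the coordinates equal to 1).\<close>
definition cube_verts :: "nat \<Rightarrow> nat set set" where
  "cube_verts n = Pow {..<n}"

definition cube_adj :: "nat set \<Rightarrow> nat set \<Rightarrow> bool" where
  "cube_adj u w \<longleftrightarrow> card ((u - w) \<union> (w - u)) = 1"

definition cube_deg :: "nat \<Rightarrow> nat set \<Rightarrow> nat" where
  "cube_deg n u = card {w \<in> cube_verts n. cube_adj u w}"

definition zvecs :: "nat \<Rightarrow> (nat set \<Rightarrow> int) set" where
  "zvecs n = {f. \<forall>x. x \<notin> cube_verts n \<longrightarrow> f x = 0}"

definition cube_laplacian :: "nat \<Rightarrow> (nat set \<Rightarrow> int) \<Rightarrow> (nat set \<Rightarrow> int)" where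
  "cube_laplacian n f = (\<lambda>u. if u \<in> cube_verts n then
      int (cube_deg n u) * f u - (\<Sum>w\<in>{w \<in> cube_verts n. cube_adj u w}. f w) else 0)"

definition lap_image :: "nat \<Rightarrow> (nat set \<Rightarrow> int) set" where
  "lap_image n = cube_laplacian n ` zvecs n"

text \<open>Representatives of the torsion subgroup K(Q_n) of coker L.\<close>
definition sandpile_torsion :: "nat \<Rightarrow> (nat set \<Rightarrow> int) set" where
  "sandpile_torsion n = {v \<in> zvecs n. \<exists>k::int. k > 0 \<and> (\<lambda>u. k * v u) \<in> lap_image n}"

text \<open>Exponent of K(Q_n) (= its largest invariant factor c_1).\<close>
definition sandpile_exponent :: "nat \<Rightarrow> nat" where
  "sandpile_exponent n = (LEAST e::nat. e > 0 \<and>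
      (\<forall>v \<in> sandpile_torsion n. (\<lambda>u. int e * v u) \<in> lap_image n))"

end

theory Submission
  imports Defs "HOL-Computational_Algebra.Polynomial"
begin
definition lam :: "rat poly \<Rightarrow> rat" where
  "lam p = (\<Sum>k\<le>degree p. coeff p k / of_nat (Suc k))"

lemma lam_eq:
  assumes "degree p < K"
  shows "lam p = (\<Sum>k<K. coeff p k / of_nat (Suc k))"
proof -
  have "(\<Sum>k\<le>degree p. coeff p k / of_nat (Suc k)) = (\<Sum>k<K. coeff p k / of_nat (Suc k))"
    by (rule sum.mono_neutral_left) (use assms in \<open>auto simp: coeff_eq_0\<close>)
  thus ?thesis by (simp add: lam_def)
qed

lemma lam_add: "lam (p + q) = lam p + lam q"
proof -
  define K where "K = Suc (max (degree p) (degree q))"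
  have "degree (p+q) < K" unfolding K_def using degree_add_le_max[of p q] by linarith
  moreover have "degree p < K" "degree q < K" unfolding K_def by auto
  ultimately show ?thesis by (simp add: lam_eq[of _ K] sum.distrib add_divide_distrib)
qed

lemma lam_smult: "lam (smult c p) = c * lam p"
proof -
  have "degree (smult c p) < Suc (degree p)" using degree_smult_le[of c p] by linarith
  hence "lam (smult c p) = (\<Sum>k<Suc (degree p). c * (coeff p k / of_nat (Suc k)))"
    by (subst lam_eq[of _ "Suc (degree p)"]) auto
  also have "\<dots> = c * lam p" by (subst lam_eq[of p "Suc (degree p)"]) (auto simp: sum_distrib_left simp del: sum.lessThan_Suc)
  finally show ?thesis .
qed

lemma lam_minus: "lam (- p) = - lam p"
  using lam_smult[of "-1" p] by simp

lemma lam_diff: "lam (p - q) = lam p - lam q"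
  using lam_add[of p "-q"] lam_minus[of q] by simp

lemma lam_sum: "finite A \<Longrightarrow> lam (\<Sum>x\<in>A. f x) = (\<Sum>x\<in>A. lam (f x))"
  by (induction A rule: finite_induct) (auto simp: lam_add, simp add: lam_def)

lemma lam_monom: "lam (monom c m) = c / of_nat (Suc m)"
proof -
  have "degree (monom c m) < Suc m" using degree_monom_le[of c m] by linarith
  hence "lam (monom c m) = (\<Sum>k<Suc m. coeff (monom c m) k / of_nat (Suc k))" by (rule lam_eq)
  also have "\<dots> = c / of_nat (Suc m)"
    by (subst sum.remove[of _ m]) (auto simp: coeff_monom)
  finally show ?thesis .
qed

lemma lam_pderiv: "lam (pderiv p) = poly p 1 - poly p 0"
proof -
  define d where "d = degree p"
  have "degree (pderiv p) < Suc d" unfolding d_def degree_pderiv by linarith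
  hence "lam (pderiv p) = (\<Sum>k<Suc d. coeff (pderiv p) k / of_nat (Suc k))" by (rule lam_eq)
  also have "\<dots> = (\<Sum>k<Suc d. coeff p (Suc k))"
    by (rule sum.cong) (auto simp: coeff_pderiv)
  also have "\<dots> = (\<Sum>k<d. coeff p (Suc k))"
    by (simp add: d_def coeff_eq_0)
  finally have 1: "lam (pderiv p) = (\<Sum>k<d. coeff p (Suc k))" .
  have "poly p 1 = (\<Sum>i<Suc d. coeff p i)" by (simp add: poly_altdef d_def lessThan_Suc_atMost)
  also have "\<dots> = coeff p 0 + (\<Sum>k<d. coeff p (Suc k))" by (rule sum.lessThan_Suc_shift)
  finally show ?thesis using 1 by (simp add: poly_0_coeff_0)
qed

definition pa :: "rat poly" where "pa = [:2,-1:]"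
definition pb :: "rat poly" where "pb = [:0,1:]"

lemma pderiv_pa: "pderiv pa = -1"
  by (rule poly_eqI) (simp add: pa_def pderiv_pCons coeff_pCons split: nat.split)
lemma pderiv_pb: "pderiv pb = 1" by (simp add: pb_def pderiv_pCons)

lemma smult_nat: "smult (of_nat k) p = of_nat k * p"
  by (simp add: of_nat_mult_conv_smult)

lemma dpa: "pderiv (pa^Suc u) = - (of_nat (Suc u) * pa^u)"
  by (simp only: pderiv_power_Suc pderiv_pa smult_nat) simp?
lemma dpb: "pderiv (pb^Suc u) = of_nat (Suc u) * pb^u"
  by (simp only: pderiv_power_Suc pderiv_pb smult_nat) simp?

lemma id_int: "smult (of_nat (u+t+4)) (pa^Suc u * pb^Suc t) - smult (of_nat (Suc u)) (pa^u * pb^Suc (Suc t))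
   - smult (of_nat (Suc t)) (pa^Suc (Suc u) * pb^t) = - pderiv ((pa - pb) * pa^Suc u * pb^Suc t)"
proof -
  have "pderiv ((pa - pb) * pa^Suc u * pb^Suc t) = 
     (pa - pb) * pa^Suc u * pderiv (pb^Suc t) + pb^Suc t * ((pa - pb) * pderiv (pa^Suc u) + pa^Suc u * (pderiv pa - pderiv pb))"
    by (simp only: pderiv_mult pderiv_diff)
  also have "\<dots> = (pa - pb) * pa^Suc u * (of_nat (Suc t) * pb^t) + pb^Suc t * ((pa - pb) * (- (of_nat (Suc u) * pa^u)) + pa^Suc u * (-1 - 1))"
    by (simp only: dpa dpb pderiv_pa pderiv_pb)
  finally have eq: "pderiv ((pa - pb) * pa^Suc u * pb^Suc t) = (pa - pb) * pa^Suc u * (of_nat (Suc t) * pb^t) + pb^Suc t * ((pa - pb) * (- (of_nat (Suc u) * pa^u)) + pa^Suc u * (-1 - 1))" .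
  show ?thesis by (simp only: eq smult_nat) (simp add: algebra_simps)
qed

lemma id0: "smult (of_nat (t+3)) (pb^Suc t) - smult (of_nat (Suc t)) (pa * pb^t) = - pderiv ((pa - pb) * pb^Suc t)"
proof -
  have eq: "pderiv ((pa - pb) * pb^Suc t) = (pa - pb) * (of_nat (Suc t) * pb^t) + pb^Suc t * (-1 - 1)"
    by (simp only: pderiv_mult pderiv_diff dpb pderiv_pa pderiv_pb)
  show ?thesis by (simp only: eq smult_nat) (simp add: algebra_simps)
qed

lemma idN: "smult (of_nat (u+3)) (pa^Suc u) - smult (of_nat (Suc u)) (pa^u * pb) = - pderiv ((pa - pb) * pa^Suc u)"
proof -
  have eq: "pderiv ((pa - pb) * pa^Suc u) = (pa - pb) * (- (of_nat (Suc u) * pa^u)) + pa^Suc u * (-1 - 1)"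
    by (simp only: pderiv_mult pderiv_diff dpa pderiv_pa pderiv_pb)
  show ?thesis by (simp only: eq smult_nat) (simp add: algebra_simps)
qed

definition Epoly :: "nat \<Rightarrow> nat \<Rightarrow> rat poly" where
  "Epoly n w = pa^w * pb^(n-1-w)"
definition Gpoly :: "nat \<Rightarrow> nat \<Rightarrow> rat poly" where
  "Gpoly n w = (pa - pb) * pa^w * pb^(n-1-w)"
definition E :: "nat \<Rightarrow> nat \<Rightarrow> rat" where
  "E n w = lam (Epoly n w)"

lemma poly_rec:
  assumes "2 \<le> n" "w \<le> n - 1"
  shows "smult (of_nat (n+1)) (Epoly n w) - smult (of_nat w) (Epoly n (w-1))
     - smult (of_nat (n-1-w)) (Epoly n (w+1)) = - pderiv (Gpoly n w)"
proof (cases "w = 0")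
  case True
  then obtain t where t: "n - 1 = Suc t" using assms by (cases "n - 1") auto
  hence n: "n + 1 = t + 3" by auto
  have e: "n - 1 - 0 = Suc t" "n - 1 - (0 + 1) = t" using t by auto
  show ?thesis using id0[of t] True unfolding Epoly_def Gpoly_def True e n by simp
next
  case False
  then obtain u where u: "w = Suc u" by (cases w) auto
  show ?thesis
  proof (cases "w = n - 1")
    case True
    hence n: "n = Suc (Suc u)" using u assms by auto
    show ?thesis using idN[of u] unfolding Epoly_def Gpoly_def n u by (simp add: algebra_simps)
  next
    case False
    then obtain t where t: "n - 1 - w = Suc t" using assms by (cases "n - 1 - w") auto
    hence n: "n = u + t + 3" using u assms by auto
    have e: "n - 1 - w = Suc t" "n - 1 - (w - 1) = Suc (Suc t)" "n - 1 - (w + 1) = t" "n + 1 = u+t+4" using n u by auto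
    show ?thesis using id_int[of u t] unfolding Epoly_def Gpoly_def e unfolding u by (simp add: algebra_simps)
  qed
qed

lemma E_rec:
  assumes "2 \<le> n" "w \<le> n - 1"
  shows "of_nat (n+1) * E n w - of_nat w * E n (w-1) - of_nat (n-1-w) * E n (w+1)
       = (if w = n - 1 then 2^n else 0)"
proof -
  have "of_nat (n+1) * E n w - of_nat w * E n (w-1) - of_nat (n-1-w) * E n (w+1)
      = lam (- pderiv (Gpoly n w))"
    unfolding poly_rec[OF assms, symmetric] E_def by (simp add: lam_diff lam_smult)
  also have "\<dots> = poly (Gpoly n w) 0 - poly (Gpoly n w) 1"
    by (simp add: lam_minus lam_pderiv)
  also have "poly (Gpoly n w) 1 = 0" by (simp add: Gpoly_def pa_def pb_def)
  also have "poly (Gpoly n w) 0 = (if w = n - 1 then 2^n else 0)"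
  proof -
    have "poly (Gpoly n w) 0 = 2 * 2^w * 0^(n-1-w)" by (simp add: Gpoly_def pa_def pb_def)
    also have "\<dots> = (if w = n - 1 then 2^n else 0)"
      using assms by (auto simp: power_Suc[symmetric] simp del: power_Suc)
    finally show ?thesis .
  qed
  finally show ?thesis by simp
qed

lemma pa_split: "pa = (- pb) + [:2:]" by (simp add: pa_def pb_def)
lemma pb_neg_pow: "(- pb)^k = smult ((-1)^k) (pb^k)" by (induction k) simp_all
lemma term_monom: "of_nat (w choose k) * smult ((-1)^k) (pb^k) * [:2:]^(w-k) * pb^m = monom ((-1)^k * of_nat (w choose k) * 2^(w-k)) (k + m)"
proof -
  have a: "(of_nat (w choose k) :: rat poly) = smult (of_nat (w choose k)) 1" by (simp add: of_nat_poly)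
  have b: "([:2:] :: rat poly)^(w-k) = smult (2^(w-k)) 1" by (simp add: poly_const_pow)
  show ?thesis unfolding a b
    by (simp add: monom_altdef pb_def power_add mult.commute mult.left_commute)
qed

lemma E_sum:
  assumes "w \<le> n - 1" "1 \<le> n"
  shows "E n w = (\<Sum>j\<le>w. (-1)^j * of_nat (w choose j) * 2^(w-j) / of_nat (n - (w - j)))"
proof -
  define m where "m = n - 1 - w"
  have "Epoly n w = (\<Sum>k\<le>w. of_nat (w choose k) * (- pb)^k * [:2:]^(w-k)) * pb^m"
    unfolding Epoly_def m_def pa_split by (rule arg_cong[where f="\<lambda>x. x * pb^(n-1-w)"], rule binomial_ring)
  also have "\<dots> = (\<Sum>k\<le>w. monom ((-1)^k * of_nat (w choose k) * 2^(w-k)) (k + m))"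
    unfolding sum_distrib_right pb_neg_pow term_monom ..
  finally have "E n w = (\<Sum>k\<le>w. lam (monom ((-1)^k * of_nat (w choose k) * 2^(w-k)) (k + m)))"
    by (simp add: E_def lam_sum)
  also have "\<dots> = (\<Sum>j\<le>w. (-1)^j * of_nat (w choose j) * 2^(w-j) / of_nat (n - (w - j)))"
    unfolding lam_monom by (rule sum.cong[OF refl]) (use assms in \<open>auto simp: m_def Suc_diff_le[symmetric]\<close>)
  finally show ?thesis .
qed

definition flip :: "nat \<Rightarrow> nat set \<Rightarrow> nat set" where
  "flip i x = (if i \<in> x then x - {i} else insert i x)"

lemma mem_flip: "k \<in> flip i x \<longleftrightarrow> (if k = i then i \<notin> x else k \<in> x)"
  by (auto simp: flip_def)

lemma flip_flip [simp]: "flip i (flip i x) = x"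
  by (auto simp: flip_def)

lemma flip_in: "x \<in> cube_verts n \<Longrightarrow> i < n \<Longrightarrow> flip i x \<in> cube_verts n"
  by (auto simp: flip_def cube_verts_def)

lemma cube_fin: "finite (cube_verts n)"
  by (simp add: cube_verts_def)

lemma adj_iff:
  assumes "x \<in> cube_verts n" "y \<in> cube_verts n"
  shows "cube_adj x y \<longleftrightarrow> (\<exists>i<n. y = flip i x)"
proof
  assume "cube_adj x y"
  then obtain i where i: "(x - y) \<union> (y - x) = {i}"
    unfolding cube_adj_def by (auto simp: card_1_singleton_iff)
  hence "i \<in> x \<union> y" by auto
  hence "i < n" using assms by (auto simp: cube_verts_def)
  moreover have "y = flip i x"
  proof (rule set_eqI)
    fix k
    have "k \<in> (x - y) \<union> (y - x) \<longleftrightarrow> k = i" using i by simp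
    thus "k \<in> y \<longleftrightarrow> k \<in> flip i x" unfolding mem_flip by auto
  qed
  ultimately show "\<exists>i<n. y = flip i x" by blast
next
  assume "\<exists>i<n. y = flip i x"
  then obtain i where "y = flip i x" by blast
  hence "(x - y) \<union> (y - x) = {i}" by (auto simp: flip_def)
  thus "cube_adj x y" by (simp add: cube_adj_def)
qed

lemma inj_flip: "inj (\<lambda>i. flip i x)"
proof (rule injI)
  fix i j assume "flip i x = flip j x"
  hence "(i \<in> flip i x) = (i \<in> flip j x)" by simp
  thus "i = j" unfolding mem_flip by (cases "i = j") auto
qed

lemma nbr_set:
  assumes "x \<in> cube_verts n"
  shows "{w \<in> cube_verts n. cube_adj x w} = (\<lambda>i. flip i x) ` {..<n}"
  using assms adj_iff[OF assms] flip_in[OF assms] by auto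

lemma sum_nbr:
  assumes "x \<in> cube_verts n"
  shows "(\<Sum>w\<in>{w \<in> cube_verts n. cube_adj x w}. f w) = (\<Sum>i<n. f (flip i x))"
  unfolding nbr_set[OF assms] by (rule sum.reindex_cong[OF inj_on_subset[OF inj_flip]]) auto

lemma deg: "x \<in> cube_verts n \<Longrightarrow> cube_deg n x = n"
  unfolding cube_deg_def nbr_set by (simp add: card_image inj_on_subset[OF inj_flip])

lemma lap_flip: "cube_laplacian n z u = (if u \<in> cube_verts n then int n * z u - (\<Sum>i<n. z (flip i u)) else 0)"
  by (simp add: cube_laplacian_def deg sum_nbr)

definition Lq :: "nat \<Rightarrow> (nat set \<Rightarrow> rat) \<Rightarrow> nat set \<Rightarrow> rat" where
  "Lq n f u = (if u \<in> cube_verts n then of_nat n * f u - (\<Sum>i<n. f (flip i u)) else 0)"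

lemma Lq_of_int: "of_int (cube_laplacian n z u) = Lq n (\<lambda>x. of_int (z x)) u"
  by (simp add: lap_flip Lq_def)

lemma Lq_cong: "(\<And>x. x \<in> cube_verts n \<Longrightarrow> f x = g x) \<Longrightarrow> Lq n f u = Lq n g u"
  unfolding Lq_def using flip_in by auto

lemma Lq_lin: "Lq n (\<lambda>x. \<alpha> * f x + c) u = \<alpha> * Lq n f u"
  by (simp add: Lq_def sum.distrib sum_distrib_left algebra_simps)

lemma Lq_diff: "Lq n (\<lambda>x. f x - g x) u = Lq n f u - Lq n g u"
  by (simp add: Lq_def sum_subtractf algebra_simps)

lemma Lq_kernel:
  assumes L0: "\<And>u. u \<in> cube_verts n \<Longrightarrow> Lq n f u = 0"
    and x: "x \<in> cube_verts n" and y: "y \<in> cube_verts n"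
  shows "f x = f y"
proof -
  define M where "M = Max (f ` cube_verts n)"
  define S where "S = {x \<in> cube_verts n. f x = M}"
  have ne: "cube_verts n \<noteq> {}" by (auto simp: cube_verts_def)
  have le: "f z \<le> M" if "z \<in> cube_verts n" for z
    unfolding M_def using that cube_fin by auto
  have "M \<in> f ` cube_verts n" unfolding M_def using cube_fin ne by (intro Max_in) auto
  then obtain x0 where x0: "x0 \<in> S" unfolding S_def by auto
  have clos: "flip i z \<in> S" if z: "z \<in> S" and i: "i < n" for z i
  proof -
    have zc: "z \<in> cube_verts n" and fz: "f z = M" using z by (auto simp: S_def)
    have "of_nat n * M - (\<Sum>i<n. f (flip i z)) = 0" using L0[OF zc] fz by (simp add: Lq_def zc)
    hence "(\<Sum>i<n. M - f (flip i z)) = 0" by (simp add: sum_subtractf)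
    moreover have "\<forall>i\<in>{..<n}. 0 \<le> M - f (flip i z)" using le flip_in[OF zc] by auto
    ultimately have "\<forall>i\<in>{..<n}. M - f (flip i z) = 0" by (subst (asm) sum_nonneg_eq_0_iff) auto
    thus ?thesis using i flip_in[OF zc i] by (auto simp: S_def)
  qed
  have down: "finite z \<Longrightarrow> z \<in> S \<Longrightarrow> {} \<in> S" for z
  proof (induction z rule: finite_induct)
    case (insert i F)
    have "i < n" using insert.prems by (auto simp: S_def cube_verts_def)
    hence "flip i (insert i F) \<in> S" using clos insert.prems by blast
    moreover have "flip i (insert i F) = F" using insert.hyps by (auto simp: flip_def)
    ultimately show ?case using insert.IH by simp
  qed simp
  have e: "{} \<in> S" using down[OF _ x0] x0 by (auto simp: S_def cube_verts_def intro: finite_subset)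
  have up: "finite z \<Longrightarrow> z \<subseteq> {..<n} \<Longrightarrow> z \<in> S" for z
  proof (induction z rule: finite_induct)
    case (insert i F)
    have "i < n" using insert.prems by auto
    hence "flip i F \<in> S" using clos insert by auto
    moreover have "flip i F = insert i F" using insert.hyps by (auto simp: flip_def)
    ultimately show ?case by simp
  qed (use e in simp)
  have "x \<in> S" "y \<in> S" using up x y by (auto simp: cube_verts_def intro: finite_subset)
  thus ?thesis by (simp add: S_def)
qed

definition wt :: "nat \<Rightarrow> nat set \<Rightarrow> nat \<Rightarrow> nat set \<Rightarrow> nat" where
  "wt n a j x = card {i \<in> {..<n} - {j}. (i \<in> x) = (i \<in> a)}"

definition psi :: "nat \<Rightarrow> nat set \<Rightarrow> nat \<Rightarrow> nat set \<Rightarrow> rat" where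
  "psi n a j x = (if j \<in> x then -1 else 1) * E n (wt n a j x)"

lemma Lq_psi:
  assumes n: "2 \<le> n" and a: "a \<subseteq> {..<n}" and j: "j < n" "j \<notin> a" and x: "x \<in> cube_verts n"
  shows "Lq n (psi n a j) x = (if x = a then 2^n else if x = insert j a then - (2^n) else 0)"
proof -
  define Ag where "Ag = {i \<in> {..<n} - {j}. (i \<in> x) = (i \<in> a)}"
  define Di where "Di = {i \<in> {..<n} - {j}. (i \<in> x) \<noteq> (i \<in> a)}"
  define w where "w = card Ag"
  define s :: rat where "s = (if j \<in> x then -1 else 1)"
  have fin: "finite Ag" "finite Di" by (auto simp: Ag_def Di_def)
  have un: "{..<n} = insert j (Ag \<union> Di)" using j by (auto simp: Ag_def Di_def)
  have disj: "Ag \<inter> Di = {}" "j \<notin> Ag \<union> Di" by (auto simp: Ag_def Di_def)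
  have cardAD: "card Ag + card Di = n - 1"
  proof -
    have "card (Ag \<union> Di) = n - 1"
      using arg_cong[OF un, of card] fin disj by (simp add: card_insert_if)
    thus ?thesis using card_Un_disjoint[OF fin disj(1)] by simp
  qed
  have psi_x: "psi n a j x = s * E n w" by (simp add: psi_def s_def wt_def Ag_def w_def)
  have fj: "psi n a j (flip j x) = - s * E n w"
  proof -
    have "{i \<in> {..<n} - {j}. (i \<in> flip j x) = (i \<in> a)} = Ag"
      by (auto simp: Ag_def mem_flip)
    thus ?thesis by (simp add: psi_def s_def wt_def w_def mem_flip)
  qed
  have fA: "psi n a j (flip i x) = s * E n (w - 1)" if i: "i \<in> Ag" for i
  proof -
    have "{k \<in> {..<n} - {j}. (k \<in> flip i x) = (k \<in> a)} = Ag - {i}"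
      using i by (auto simp: Ag_def mem_flip)
    moreover have "j \<in> flip i x \<longleftrightarrow> j \<in> x" using i by (auto simp: Ag_def mem_flip)
    ultimately show ?thesis using i fin by (simp add: psi_def s_def wt_def w_def)
  qed
  have fD: "psi n a j (flip i x) = s * E n (w + 1)" if i: "i \<in> Di" for i
  proof -
    have "{k \<in> {..<n} - {j}. (k \<in> flip i x) = (k \<in> a)} = insert i Ag"
      using i by (auto simp: Ag_def Di_def mem_flip)
    moreover have "j \<in> flip i x \<longleftrightarrow> j \<in> x" using i by (auto simp: Di_def mem_flip)
    moreover have "i \<notin> Ag" using i by (auto simp: Ag_def Di_def)
    ultimately show ?thesis using i fin by (simp add: psi_def s_def wt_def w_def)
  qed
  have "(\<Sum>i<n. psi n a j (flip i x)) = psi n a j (flip j x) + (\<Sum>i\<in>Ag. psi n a j (flip i x)) + (\<Sum>i\<in>Di. psi n a j (flip i x))"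
    unfolding un using fin disj by (simp add: sum.union_disjoint)
  also have "\<dots> = - s * E n w + of_nat w * (s * E n (w - 1)) + of_nat (n - 1 - w) * (s * E n (w + 1))"
  proof -
    have "(\<Sum>i\<in>Ag. psi n a j (flip i x)) = (\<Sum>i\<in>Ag. s * E n (w - 1))" using fA by simp
    moreover have "(\<Sum>i\<in>Di. psi n a j (flip i x)) = (\<Sum>i\<in>Di. s * E n (w + 1))" using fD by simp
    moreover have "card Di = n - 1 - w" using cardAD by (simp add: w_def)
    ultimately show ?thesis using fj by (simp add: w_def)
  qed
  finally have sumeq: "(\<Sum>i<n. psi n a j (flip i x)) = - s * E n w + of_nat w * (s * E n (w - 1)) + of_nat (n - 1 - w) * (s * E n (w + 1))" .
  have wle: "w \<le> n - 1" using cardAD by (simp add: w_def)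
  have "Lq n (psi n a j) x = s * (of_nat (n+1) * E n w - of_nat w * E n (w-1) - of_nat (n-1-w) * E n (w+1))"
    unfolding Lq_def using x psi_x sumeq by (simp add: algebra_simps)
  also have "\<dots> = s * (if w = n - 1 then 2^n else 0)" using E_rec[OF n wle] by simp
  also have "(w = n - 1) \<longleftrightarrow> (x = a \<or> x = insert j a)"
  proof
    assume "w = n - 1"
    hence "Di = {}" using cardAD fin by (simp add: w_def)
    hence "\<forall>i<n. i \<noteq> j \<longrightarrow> (i \<in> x) = (i \<in> a)" by (auto simp: Di_def)
    thus "x = a \<or> x = insert j a" using x a j by (auto simp: cube_verts_def)
  next
    assume "x = a \<or> x = insert j a"
    hence "Di = {}" using j by (auto simp: Di_def)
    thus "w = n - 1" using cardAD by (simp add: w_def)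
  qed
  finally show ?thesis using j by (auto simp: s_def)
qed

lemma zvecs_lap: "cube_laplacian n z \<in> zvecs n"
  by (simp add: zvecs_def cube_laplacian_def)

lemma lap_add: "cube_laplacian n (\<lambda>x. z1 x + z2 x) u = cube_laplacian n z1 u + cube_laplacian n z2 u"
  by (simp add: lap_flip sum.distrib algebra_simps)

lemma lap_smult: "cube_laplacian n (\<lambda>x. k * z x) u = k * cube_laplacian n z u"
  by (simp add: lap_flip sum_distrib_left algebra_simps)

lemma image_add: "f \<in> lap_image n \<Longrightarrow> g \<in> lap_image n \<Longrightarrow> (\<lambda>u. f u + g u) \<in> lap_image n"
proof -
  assume "f \<in> lap_image n" "g \<in> lap_image n"
  then obtain z1 z2 where z: "z1 \<in> zvecs n" "z2 \<in> zvecs n" "f = cube_laplacian n z1" "g = cube_laplacian n z2"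
    by (auto simp: lap_image_def)
  have "(\<lambda>x. z1 x + z2 x) \<in> zvecs n" using z by (simp add: zvecs_def)
  moreover have "(\<lambda>u. f u + g u) = cube_laplacian n (\<lambda>x. z1 x + z2 x)" using z by (simp add: lap_add fun_eq_iff)
  ultimately show ?thesis by (simp add: lap_image_def)
qed

lemma image_smult: "f \<in> lap_image n \<Longrightarrow> (\<lambda>u. k * f u) \<in> lap_image n"
proof -
  assume "f \<in> lap_image n"
  then obtain z where z: "z \<in> zvecs n" "f = cube_laplacian n z"
    by (auto simp: lap_image_def)
  have "(\<lambda>x. k * z x) \<in> zvecs n" using z by (simp add: zvecs_def)
  moreover have "(\<lambda>u. k * f u) = cube_laplacian n (\<lambda>x. k * z x)" using z by (simp add: lap_smult fun_eq_iff)
  ultimately show ?thesis by (simp add: lap_image_def)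
qed

lemma image_zero: "(\<lambda>u. 0) \<in> lap_image n"
  using image_smult[of "cube_laplacian n (\<lambda>x. 0)" n 0] by (auto simp: lap_image_def zvecs_def)

lemma image_diff: "f \<in> lap_image n \<Longrightarrow> g \<in> lap_image n \<Longrightarrow> (\<lambda>u. f u - g u) \<in> lap_image n"
  using image_add[of f n "\<lambda>u. (-1) * g u"] image_smult[of g n "-1"] by simp

definition delta :: "nat set \<Rightarrow> nat \<Rightarrow> nat set \<Rightarrow> int" where
  "delta a j u = (if u = a then 1 else if u = insert j a then -1 else 0)"

lemma edge_kill:
  assumes n: "2 \<le> n" and a: "a \<subseteq> {..<n}" and j: "j < n" "j \<notin> a"
    and c: "\<forall>x\<in>cube_verts n. of_int e * psi n a j x / 2^n + c \<in> \<int>"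
  shows "(\<lambda>u. e * delta a j u) \<in> lap_image n"
proof -
  define g where "g x = of_int e / 2^n * psi n a j x + c" for x
  define z where "z x = (if x \<in> cube_verts n then \<lfloor>g x\<rfloor> else 0)" for x
  have zg: "of_int (z x) = g x" if "x \<in> cube_verts n" for x
    using c that unfolding z_def g_def by (auto elim!: Ints_cases)
  have "z \<in> zvecs n" by (simp add: z_def zvecs_def)
  moreover have "cube_laplacian n z = (\<lambda>u. e * delta a j u)"
  proof
    fix u
    show "cube_laplacian n z u = e * delta a j u"
    proof (cases "u \<in> cube_verts n")
      case False
      moreover have "a \<in> cube_verts n" "insert j a \<in> cube_verts n" using a j by (auto simp: cube_verts_def)
      ultimately show ?thesis by (auto simp: lap_flip delta_def)
    next
      case True
      have "(of_int (cube_laplacian n z u) :: rat) = Lq n (\<lambda>x. of_int (z x)) u" by (rule Lq_of_int)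
      also have "\<dots> = Lq n g u" by (rule Lq_cong) (simp add: zg)
      also have "\<dots> = of_int e / 2^n * Lq n (psi n a j) u" unfolding g_def by (rule Lq_lin)
      also have "\<dots> = of_int (e * delta a j u)"
        using Lq_psi[OF n a j True] by (simp add: delta_def)
      finally show ?thesis by (simp only: of_int_eq_iff)
    qed
  qed
  ultimately show ?thesis unfolding lap_image_def by (metis image_eqI)
qed

lemma edge_kill_conv:
  assumes n: "2 \<le> n" and a: "a \<subseteq> {..<n}" and j: "j < n" "j \<notin> a"
    and im: "(\<lambda>u. e * delta a j u) \<in> lap_image n"
  shows "\<exists>c. \<forall>x\<in>cube_verts n. of_int e * psi n a j x / 2^n + c \<in> \<int>"
proof -
  obtain z where z: "z \<in> zvecs n" "cube_laplacian n z = (\<lambda>u. e * delta a j u)"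
    using im by (auto simp: lap_image_def)
  define h where "h x = of_int (z x) - (of_int e / 2^n * psi n a j x + 0)" for x
  have "Lq n h u = 0" if u: "u \<in> cube_verts n" for u
  proof -
    have "Lq n h u = Lq n (\<lambda>x. of_int (z x)) u - of_int e / 2^n * Lq n (psi n a j) u"
      unfolding h_def Lq_diff Lq_lin ..
    also have "Lq n (\<lambda>x. of_int (z x)) u = of_int (e * delta a j u)"
      using Lq_of_int[of n z u] z(2) by simp
    finally show ?thesis using Lq_psi[OF n a j u] by (simp add: delta_def)
  qed
  hence hc: "h x = h {}" if "x \<in> cube_verts n" for x
    using Lq_kernel[of n h x "{}"] that by (auto simp: cube_verts_def)
  show ?thesis
  proof (intro exI ballI)
    fix x assume "x \<in> cube_verts n"
    hence "of_int e * psi n a j x / 2^n + h {} = of_int (z x)" using hc[of x] by (simp add: h_def)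
    thus "of_int e * psi n a j x / 2^n + h {} \<in> \<int>" by simp
  qed
qed

lemma lap_sum_zero:
  shows "(\<Sum>x\<in>cube_verts n. cube_laplacian n z x) = 0"
proof -
  have r: "(\<Sum>x\<in>cube_verts n. z (flip i x)) = (\<Sum>x\<in>cube_verts n. z x)" if "i < n" for i
    by (rule sum.reindex_bij_witness[of _ "flip i" "flip i"]) (use that flip_in in auto)
  have "(\<Sum>x\<in>cube_verts n. cube_laplacian n z x) = (\<Sum>x\<in>cube_verts n. int n * z x - (\<Sum>i<n. z (flip i x)))"
    by (rule sum.cong) (auto simp: lap_flip)
  also have "\<dots> = int n * (\<Sum>x\<in>cube_verts n. z x) - (\<Sum>i<n. \<Sum>x\<in>cube_verts n. z (flip i x))"
    by (simp add: sum_subtractf sum_distrib_left sum.swap[of _ "{..<n}"])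
  also have "\<dots> = 0" using r by simp
  finally show ?thesis .
qed

lemma torsion_sum_zero:
  assumes "v \<in> sandpile_torsion n"
  shows "(\<Sum>x\<in>cube_verts n. v x) = 0"
proof -
  obtain k :: int where k: "k > 0" "(\<lambda>u. k * v u) \<in> lap_image n"
    using assms by (auto simp: sandpile_torsion_def)
  then obtain z where "(\<lambda>u. k * v u) = cube_laplacian n z" by (auto simp: lap_image_def)
  hence "(\<Sum>x\<in>cube_verts n. k * v x) = 0" using lap_sum_zero[of n z] by metis
  hence "k * (\<Sum>x\<in>cube_verts n. v x) = 0" by (simp add: sum_distrib_left)
  thus ?thesis using k by simp
qed

definition killer :: "nat \<Rightarrow> nat \<Rightarrow> bool" where
  "killer n e \<longleftrightarrow> (\<forall>v \<in> sandpile_torsion n. (\<lambda>u. int e * v u) \<in> lap_image n)"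

lemma W_sum:
  assumes "finite A" "\<And>x. x \<in> A \<Longrightarrow> (\<lambda>u. e * g x u) \<in> lap_image n"
  shows "(\<lambda>u. e * (\<Sum>x\<in>A. g x u)) \<in> lap_image n"
  using assms
proof (induction A rule: finite_induct)
  case empty thus ?case using image_zero by simp
next
  case (insert y F)
  have "(\<lambda>u. e * g y u + e * (\<Sum>x\<in>F. g x u)) \<in> lap_image n"
    using insert by (intro image_add) auto
  thus ?case using insert.hyps by (simp add: algebra_simps)
qed

lemma killer_from_edges:
  assumes edges: "\<And>a j. a \<subseteq> {..<n} \<Longrightarrow> j < n \<Longrightarrow> j \<notin> a \<Longrightarrow> (\<lambda>u. e * delta a j u) \<in> lap_image n"
    and v: "v \<in> sandpile_torsion n"
  shows "(\<lambda>u. e * v u) \<in> lap_image n"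
proof -
  define ind where "ind (x::nat set) (u::nat set) = (if u = x then 1 else 0 :: int)" for x u
  have pth: "(\<lambda>u. e * (ind x u - ind {} u)) \<in> lap_image n" if "finite x" "x \<subseteq> {..<n}" for x
    using that
  proof (induction x rule: finite_induct)
    case empty thus ?case using image_zero by (simp add: ind_def)
  next
    case (insert i F)
    have "(\<lambda>u. e * (ind F u - ind {} u) - e * delta F i u) \<in> lap_image n"
      using insert by (intro image_diff edges) auto
    moreover have "delta F i u = ind F u - ind (insert i F) u" for u
      using insert.hyps by (auto simp: delta_def ind_def)
    ultimately show ?case by (simp add: algebra_simps)
  qed
  have vz: "v \<in> zvecs n" and s0: "(\<Sum>x\<in>cube_verts n. v x) = 0"
    using v torsion_sum_zero[OF v] by (auto simp: sandpile_torsion_def)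
  have "(\<lambda>u. e * (\<Sum>x\<in>cube_verts n. v x * (ind x u - ind {} u))) \<in> lap_image n"
  proof (rule W_sum[OF cube_fin])
    fix x assume "x \<in> cube_verts n"
    hence xs: "x \<subseteq> {..<n}" by (simp add: cube_verts_def)
    have "finite x" using xs by (rule finite_subset) simp
    hence "(\<lambda>u. e * (ind x u - ind {} u)) \<in> lap_image n" using pth xs by blast
    hence "(\<lambda>u. v x * (e * (ind x u - ind {} u))) \<in> lap_image n" by (rule image_smult)
    thus "(\<lambda>u. e * (v x * (ind x u - ind {} u))) \<in> lap_image n" by (simp add: algebra_simps)
  qed
  moreover have "(\<Sum>x\<in>cube_verts n. v x * (ind x u - ind {} u)) = v u" for u
  proof -
    have "(\<Sum>x\<in>cube_verts n. v x * (ind x u - ind {} u)) = (\<Sum>x\<in>cube_verts n. v x * ind x u) - (\<Sum>x\<in>cube_verts n. v x) * ind {} u"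
      by (simp add: sum_subtractf right_diff_distrib sum_distrib_right)
    also have "(\<Sum>x\<in>cube_verts n. v x * ind x u) = (if u \<in> cube_verts n then v u else 0)"
      by (simp add: ind_def cube_fin if_distrib[of "\<lambda>t. v _ * t"] sum.delta' cong: if_cong)
    finally show ?thesis using s0 vz by (auto simp: zvecs_def)
  qed
  ultimately show ?thesis by simp
qed

abbreviation mult2 :: "nat \<Rightarrow> nat" where "mult2 x \<equiv> multiplicity (2::nat) x"

definition Fv :: "nat \<Rightarrow> nat" where
  "Fv n = max (Max {multiplicity (2::nat) x + x | x. 1 \<le> x \<and> x < n}) (multiplicity (2::nat) n + n - 1)"

definition vv :: "nat \<Rightarrow> nat" where "vv n = multiplicity (2::nat) (fact n)"

lemma Fset_fin: "finite {multiplicity (2::nat) x + x | x. 1 \<le> x \<and> x < n}"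
proof -
  have "{multiplicity (2::nat) x + x | x. 1 \<le> x \<and> x < n} \<subseteq> (\<lambda>x. multiplicity (2::nat) x + x) ` {..<n}"
    by auto
  thus ?thesis by (rule finite_subset) simp
qed

lemma Fv_ge1: "1 \<le> x \<Longrightarrow> x < n \<Longrightarrow> mult2 x + x \<le> Fv n"
  unfolding Fv_def using Fset_fin[of n] by (auto intro!: max.coboundedI1 Max_ge)

lemma Fv_ge2: "mult2 n + n - 1 \<le> Fv n"
  unfolding Fv_def by simp

lemma Fv_cases:
  assumes "2 \<le> n"
  shows "Fv n = mult2 n + n - 1 \<or> (mult2 n + n - 1 < Fv n \<and> (\<exists>x. 1 \<le> x \<and> x < n \<and> mult2 x + x = Fv n))"
proof -
  have ne: "{multiplicity (2::nat) x + x | x. 1 \<le> x \<and> x < n} \<noteq> {}" using assms by auto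
  have "Max {multiplicity (2::nat) x + x | x. 1 \<le> x \<and> x < n} \<in> {multiplicity (2::nat) x + x | x. 1 \<le> x \<and> x < n}"
    using Max_in[OF Fset_fin ne] .
  thus ?thesis unfolding Fv_def by (auto simp: max_def)
qed

lemma fact_ne: "fact n \<noteq> (0::nat)" by simp

lemma mult_le_vv: "1 \<le> x \<Longrightarrow> x \<le> n \<Longrightarrow> mult2 x \<le> vv n"
  unfolding vv_def by (rule dvd_imp_multiplicity_le[OF dvd_fact fact_ne])

lemma Fv_le: "2 \<le> n \<Longrightarrow> Fv n \<le> vv n + n"
proof -
  assume n: "2 \<le> n"
  have "mult2 x + x \<le> vv n + n" if "1 \<le> x" "x < n" for x using mult_le_vv[of x n] that by simp
  moreover have "mult2 n + n - 1 \<le> vv n + n" using mult_le_vv[of n n] n by simp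
  ultimately show ?thesis using Fv_cases[OF n] by (metis One_nat_def)
qed

definition cc :: "nat \<Rightarrow> nat \<Rightarrow> nat" where "cc n i = fact n div (n - i)"

lemma cc_mult: "i < n \<Longrightarrow> cc n i * (n - i) = fact n"
  unfolding cc_def by (rule dvd_div_mult_self) (rule dvd_fact, auto)

lemma cc_ne: "i < n \<Longrightarrow> cc n i \<noteq> 0"
  using cc_mult[of i n] by (metis fact_ne mult_zero_left)

lemma cc_v: "i < n \<Longrightarrow> mult2 (cc n i) + mult2 (n - i) = vv n"
proof -
  assume i: "i < n"
  have "mult2 (cc n i * (n - i)) = mult2 (cc n i) + mult2 (n - i)"
    by (rule prime_elem_multiplicity_mult_distrib) (use i cc_ne in auto)
  thus ?thesis using cc_mult[OF i] by (simp add: vv_def)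
qed

lemma mult_2pow: "y \<noteq> 0 \<Longrightarrow> mult2 (2^i * y) = i + mult2 y"
  by (subst prime_elem_multiplicity_mult_distrib) auto

definition sv :: "nat \<Rightarrow> nat" where "sv n = vv n + n - Fv n"

lemma term_mult: "i < n \<Longrightarrow> mult2 (2^i * cc n i) = i + vv n - mult2 (n - i)"
  using mult_2pow[OF cc_ne, of i n i] cc_v[of i n] by simp

lemma term_dvd:
  assumes "2 \<le> n" "1 \<le> i" "i < n"
  shows "2^(sv n) dvd 2^i * cc n i"
proof -
  have a: "mult2 (n - i) + (n - i) \<le> Fv n" using Fv_ge1[of "n - i" n] assms by simp
  have b: "mult2 (n - i) \<le> vv n" using cc_v[of i n] assms by simp
  have "sv n \<le> mult2 (2^i * cc n i)" unfolding term_mult[OF assms(3)] sv_def using a b assms by linarith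
  thus ?thesis by (rule multiplicity_dvd')
qed

lemma term_dvd_strict:
  assumes "2 \<le> n" "1 \<le> i" "i < n" "mult2 (n - i) + (n - i) < Fv n"
  shows "2^(Suc (sv n)) dvd 2^i * cc n i"
proof -
  have b: "mult2 (n - i) \<le> vv n" using cc_v[of i n] assms by simp
  have "Suc (sv n) \<le> mult2 (2^i * cc n i)" unfolding term_mult[OF assms(3)] sv_def using assms b by linarith
  thus ?thesis by (rule multiplicity_dvd')
qed

lemma term_exact:
  assumes "2 \<le> n" "1 \<le> k" "k < n" "mult2 (n - k) + (n - k) = Fv n"
  shows "\<not> 2^(Suc (sv n)) dvd 2^k * cc n k"
proof -
  have b: "mult2 (n - k) \<le> vv n" using cc_v[of k n] assms by simp
  have "mult2 (2^k * cc n k) < Suc (sv n)" unfolding term_mult[OF assms(3)] sv_def using assms b by linarith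
  thus ?thesis by (subst power_dvd_iff_le_multiplicity) (use cc_ne[OF assms(3)] in auto)
qed

lemma c0_mult: "2 \<le> n \<Longrightarrow> mult2 (2 * cc n 0) = 1 + vv n - mult2 n"
  using mult_2pow[OF cc_ne, of 0 n 1] cc_v[of 0 n] by simp

lemma c0_dvd:
  assumes "2 \<le> n"
  shows "2^(sv n) dvd 2 * cc n 0"
proof -
  have b: "mult2 n \<le> vv n" using cc_v[of 0 n] assms by simp
  have "sv n \<le> mult2 (2 * cc n 0)" unfolding c0_mult[OF assms] sv_def using Fv_ge2[of n] b assms by linarith
  thus ?thesis by (rule multiplicity_dvd')
qed

lemma c0_strict:
  assumes "2 \<le> n" "mult2 n + n - 1 < Fv n"
  shows "2^(Suc (sv n)) dvd 2 * cc n 0"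
proof -
  have b: "mult2 n \<le> vv n" using cc_v[of 0 n] assms by simp
  have "Suc (sv n) \<le> mult2 (2 * cc n 0)" unfolding c0_mult[OF assms(1)] sv_def using assms b by linarith
  thus ?thesis by (rule multiplicity_dvd')
qed

definition Zs :: "nat \<Rightarrow> nat \<Rightarrow> int" where
  "Zs n w = (\<Sum>j\<le>w. (-1)^j * int (w choose j) * 2^(w-j) * int (cc n (w-j)))"

lemma E_Z:
  assumes "1 \<le> n" "w \<le> n - 1"
  shows "E n w * of_nat (fact n) = of_int (Zs n w)"
proof -
  have "E n w * of_nat (fact n) = (\<Sum>j\<le>w. (-1)^j * of_nat (w choose j) * 2^(w-j) / of_nat (n - (w - j)) * of_nat (fact n))"
    unfolding E_sum[OF assms(2,1)] sum_distrib_right ..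
  also have "\<dots> = (\<Sum>j\<le>w. of_int ((-1)^j * int (w choose j) * 2^(w-j) * int (cc n (w-j))))"
  proof (rule sum.cong[OF refl])
    fix j assume "j \<in> {..w}"
    hence lt: "w - j < n" using assms by auto
    have pos: "(of_nat (n - (w - j)) :: rat) \<noteq> 0" using lt by simp
    have "(of_nat (fact n) :: rat) = of_nat (cc n (w-j)) * of_nat (n - (w - j))"
      using arg_cong[OF cc_mult[OF lt], of "of_nat :: nat \<Rightarrow> rat"] by simp
    thus "(-1)^j * of_nat (w choose j) * 2^(w-j) / of_nat (n - (w - j)) * of_nat (fact n) =
       (of_int ((-1)^j * int (w choose j) * 2^(w-j) * int (cc n (w-j))) :: rat)"
      using pos by simp
  qed
  finally show ?thesis by (simp add: Zs_def)
qed

lemma Zs_split: "Zs n w = (\<Sum>j<w. (-1)^j * int (w choose j) * 2^(w-j) * int (cc n (w-j))) + (-1)^w * int (cc n 0)"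
  unfolding Zs_def lessThan_Suc_atMost[symmetric] by simp

lemma Zs0: "Zs n 0 = int (cc n 0)" by (simp add: Zs_def)

lemma int_dvd_pow: "(2::nat)^s dvd m \<Longrightarrow> (2::int)^s dvd int m"
  by (metis of_nat_dvd_iff of_nat_numeral of_nat_power)

lemma sign_c0_dvd:
  assumes "(2::int)^s dvd 2 * int c"
  shows "(2::int)^s dvd ((-1)^w - 1) * int c"
proof (cases "even w")
  case True thus ?thesis by simp
next
  case False
  hence "((-1)^w - 1) * int c = - (2 * int c)" by simp
  thus ?thesis using assms by simp
qed

lemma U1:
  assumes n: "2 \<le> n" and w: "w \<le> n - 1"
  shows "(2::int)^(sv n) dvd Zs n w - Zs n 0"
proof -
  have "Zs n w - Zs n 0 = (\<Sum>j<w. (-1)^j * int (w choose j) * 2^(w-j) * int (cc n (w-j))) + ((-1)^w - 1) * int (cc n 0)"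
    unfolding Zs_split[of n w] Zs0 by (simp add: algebra_simps)
  moreover have "(2::int)^(sv n) dvd (\<Sum>j<w. (-1)^j * int (w choose j) * 2^(w-j) * int (cc n (w-j)))"
  proof (rule dvd_sum)
    fix j assume "j \<in> {..<w}"
    hence "1 \<le> w - j" "w - j < n" using w n by auto
    hence "(2::int)^(sv n) dvd int (2^(w-j) * cc n (w-j))" using term_dvd[OF n] int_dvd_pow by blast
    thus "(2::int)^(sv n) dvd (-1)^j * int (w choose j) * 2^(w-j) * int (cc n (w-j))"
      by (simp add: dvd_mult mult.assoc)
  qed
  moreover have "(2::int)^(sv n) dvd ((-1)^w - 1) * int (cc n 0)"
    using sign_c0_dvd int_dvd_pow[OF c0_dvd[OF n]] by simp
  ultimately show ?thesis by simp
qed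

lemma U2:
  assumes n: "2 \<le> n"
  shows "(2::int)^(sv n) dvd 2 * Zs n 0"
  using int_dvd_pow[OF c0_dvd[OF n]] by (simp add: Zs0)

lemma Lk:
  assumes n: "2 \<le> n" and k: "1 \<le> k" "k < n" "mult2 (n - k) + (n - k) = Fv n"
    and lt: "\<And>i. 1 \<le> i \<Longrightarrow> i < k \<Longrightarrow> mult2 (n - i) + (n - i) < Fv n"
    and c0: "mult2 n + n - 1 < Fv n"
  shows "\<not> (2::int)^(Suc (sv n)) dvd Zs n k - Zs n 0"
proof
  assume H: "(2::int)^(Suc (sv n)) dvd Zs n k - Zs n 0"
  obtain k' where k': "k = Suc k'" using k by (cases k) auto
  define f where "f j = (-1)^j * int (k choose j) * 2^(k-j) * int (cc n (k-j))" for j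
  have "Zs n k - Zs n 0 = f 0 + (\<Sum>j<k'. f (Suc j)) + ((-1)^k - 1) * int (cc n 0)"
    unfolding Zs_split[of n k] Zs0 f_def[symmetric] unfolding k' sum.lessThan_Suc_shift by (simp add: algebra_simps)
  moreover have "(2::int)^(Suc (sv n)) dvd (\<Sum>j<k'. f (Suc j))"
  proof (rule dvd_sum)
    fix j assume "j \<in> {..<k'}"
    hence j: "1 \<le> k - Suc j" "k - Suc j < n" "k - Suc j < k" using k k' by auto
    hence "(2::int)^(Suc (sv n)) dvd int (2^(k - Suc j) * cc n (k - Suc j))"
      using term_dvd_strict[OF n j(1,2) lt[OF j(1,3)]] int_dvd_pow by blast
    thus "(2::int)^(Suc (sv n)) dvd f (Suc j)"
      unfolding f_def by (simp add: dvd_mult mult.assoc)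
  qed
  moreover have "(2::int)^(Suc (sv n)) dvd ((-1)^k - 1) * int (cc n 0)"
  proof (rule sign_c0_dvd)
    have "(2::int)^(Suc (sv n)) dvd int (2 * cc n 0)" by (rule int_dvd_pow[OF c0_strict[OF n c0]])
    thus "(2::int)^(Suc (sv n)) dvd 2 * int (cc n 0)" by (simp only: of_nat_mult of_nat_numeral)
  qed
  ultimately have "(2::int)^(Suc (sv n)) dvd f 0" using H
    by (metis add.commute add_diff_cancel_left' dvd_add dvd_diff)
  hence "(2::int)^(Suc (sv n)) dvd int (2^k * cc n k)" by (simp add: f_def)
  hence "(2::nat)^(Suc (sv n)) dvd 2^k * cc n k"
    by (metis of_nat_dvd_iff of_nat_numeral of_nat_power)
  thus False using term_exact[OF n k] by simp
qed

lemma exists_k: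
  assumes n: "2 \<le> n" and c0: "mult2 n + n - 1 < Fv n"
  shows "\<exists>k. 1 \<le> k \<and> k < n \<and> mult2 (n - k) + (n - k) = Fv n \<and>
           (\<forall>i. 1 \<le> i \<longrightarrow> i < k \<longrightarrow> mult2 (n - i) + (n - i) < Fv n)"
proof -
  define A where "A = {x. 1 \<le> x \<and> x < n \<and> mult2 x + x = Fv n}"
  have fin: "finite A" unfolding A_def by (rule finite_subset[of _ "{..<n}"]) auto
  have ne: "A \<noteq> {}" using Fv_cases[OF n] c0 unfolding A_def by auto
  define X where "X = Max A"
  have XA: "X \<in> A" unfolding X_def using Max_in[OF fin ne] .
  have Xmax: "y \<le> X" if "y \<in> A" for y unfolding X_def using fin that by simp
  show ?thesis
  proof (intro exI conjI allI impI)
    show "1 \<le> n - X" "n - X < n" "mult2 (n - (n - X)) + (n - (n - X)) = Fv n" using XA by (auto simp: A_def)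
    fix i assume i: "1 \<le> i" "i < n - X"
    hence "1 \<le> n - i" "n - i < n" using XA by (auto simp: A_def)
    hence le: "mult2 (n - i) + (n - i) \<le> Fv n" by (rule Fv_ge1)
    have "n - i \<notin> A" using Xmax[of "n - i"] i by auto
    hence "mult2 (n - i) + (n - i) \<noteq> Fv n" using \<open>1 \<le> n - i\<close> \<open>n - i < n\<close> by (auto simp: A_def)
    thus "mult2 (n - i) + (n - i) < Fv n" using le by simp
  qed
qed

definition Dodd :: "nat \<Rightarrow> nat" where "Dodd n = fact n div 2^(vv n)"

lemma fact_split: "fact n = 2^(vv n) * Dodd n"
  unfolding Dodd_def vv_def by (simp add: multiplicity_dvd)

lemma Dodd_odd: "\<not> 2 dvd Dodd n"
  unfolding Dodd_def vv_def by (rule multiplicity_decompose) auto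

lemma Dodd_ne: "Dodd n \<noteq> 0"
  using fact_split[of n] by (metis fact_ne mult_0_right)

definition estar :: "nat \<Rightarrow> nat" where "estar n = 2^(Fv n) * Dodd n"

lemma estar_pos: "estar n > 0" using Dodd_ne by (simp add: estar_def)

lemma mult_estar: "mult2 (estar n) = Fv n"
proof -
  have "mult2 (estar n) = mult2 (2^(Fv n)) + mult2 (Dodd n)"
    unfolding estar_def by (rule prime_elem_multiplicity_mult_distrib) (use Dodd_ne in auto)
  moreover have "mult2 (Dodd n) = 0" using Dodd_odd by (simp add: not_dvd_imp_multiplicity_0)
  ultimately show ?thesis by simp
qed

lemma sv_eq: "2 \<le> n \<Longrightarrow> sv n + Fv n = vv n + n"
  using Fv_le[of n] by (simp add: sv_def)

lemma key_rat:
  assumes n: "2 \<le> n" and w: "w \<le> n - 1"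
  shows "of_nat (estar n) * E n w / 2^n = (of_int (Zs n w) / 2^(sv n) :: rat)"
proof -
  have f: "(of_nat (fact n) :: rat) = 2^(vv n) * of_nat (Dodd n)"
    using arg_cong[OF fact_split[of n], of "of_nat :: nat \<Rightarrow> rat"] by simp
  have Ew: "E n w = of_int (Zs n w) / of_nat (fact n)"
    using E_Z[of n w] n w by (simp add: field_simps)
  have p: "(2::rat)^(Fv n) * 2^(sv n) = 2^(vv n) * 2^n"
    using sv_eq[OF n] by (simp add: power_add[symmetric] add.commute)
  have D: "(of_nat (Dodd n) :: rat) \<noteq> 0" using Dodd_ne by simp
  show ?thesis unfolding Ew f estar_def using p D
    by (simp add: field_simps)
qed

lemma ints_div: "(2::int)^s dvd X \<Longrightarrow> (of_int X / 2^s :: rat) \<in> \<int>"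
  by (auto elim!: dvdE)

lemma wt_le: "j < n \<Longrightarrow> wt n a j x \<le> n - 1"
proof -
  assume j: "j < n"
  have "wt n a j x \<le> card ({..<n} - {j})" unfolding wt_def by (rule card_mono) auto
  thus ?thesis using j by simp
qed

lemma estar_edges:
  assumes n: "2 \<le> n" and a: "a \<subseteq> {..<n}" and j: "j < n" "j \<notin> a"
  shows "(\<lambda>u. int (estar n) * delta a j u) \<in> lap_image n"
proof (rule edge_kill[OF n a j])
  define c :: rat where "c = - (of_nat (estar n) * E n 0 / 2^n)"
  show "\<forall>x\<in>cube_verts n. of_int (int (estar n)) * psi n a j x / 2^n + c \<in> \<int>"
  proof
    fix x assume x: "x \<in> cube_verts n"
    define w where "w = wt n a j x"
    have wle: "w \<le> n - 1" unfolding w_def using wt_le[OF j(1)] .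
    have k0: "of_nat (estar n) * E n 0 / 2^n = (of_int (Zs n 0) / 2^(sv n) :: rat)" using key_rat[OF n] by simp
    have kw: "of_nat (estar n) * E n w / 2^n = (of_int (Zs n w) / 2^(sv n) :: rat)" using key_rat[OF n wle] .
    have d1: "(2::int)^(sv n) dvd Zs n w - Zs n 0" by (rule U1[OF n wle])
    have d2: "(2::int)^(sv n) dvd 2 * Zs n 0" by (rule U2[OF n])
    show "of_int (int (estar n)) * psi n a j x / 2^n + c \<in> \<int>"
    proof (cases "j \<in> x")
      case False
      hence "of_int (int (estar n)) * psi n a j x / 2^n + c = of_nat (estar n) * E n w / 2^n - of_nat (estar n) * E n 0 / 2^n"
        by (simp add: psi_def w_def c_def)
      also have "\<dots> = of_int (Zs n w - Zs n 0) / 2^(sv n)" unfolding k0 kw by (simp add: diff_divide_distrib)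
      finally show ?thesis using ints_div[OF d1] by simp
    next
      case True
      hence "of_int (int (estar n)) * psi n a j x / 2^n + c = - (of_nat (estar n) * E n w / 2^n) - of_nat (estar n) * E n 0 / 2^n"
        by (simp add: psi_def w_def c_def)
      also have "\<dots> = of_int (- (Zs n w - Zs n 0) - 2 * Zs n 0) / 2^(sv n)" unfolding k0 kw by (simp add: field_simps)
      moreover have "(2::int)^(sv n) dvd - (Zs n w - Zs n 0) - 2 * Zs n 0"
        using dvd_diff[OF dvd_minus_iff[THEN iffD2, OF d1] d2] .
      ultimately show ?thesis using ints_div by metis
    qed
  qed
qed

lemma killer_estar: "2 \<le> n \<Longrightarrow> killer n (estar n)"
  unfolding killer_def using killer_from_edges estar_edges by blast

lemma E0_val: "2 \<le> n \<Longrightarrow> E n 0 = 1 / of_nat n"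
proof -
  assume n: "2 \<le> n"
  have "E n 0 * of_nat (fact n) = of_nat (cc n 0)" using E_Z[of n 0] n by (simp add: Zs0)
  moreover have "(of_nat (fact n) :: rat) = of_nat (cc n 0) * of_nat n"
    using arg_cong[OF cc_mult[of 0 n], of "of_nat :: nat \<Rightarrow> rat"] n by simp
  moreover have "(of_nat (cc n 0) :: rat) \<noteq> 0" using cc_ne[of 0 n] n by simp
  ultimately show ?thesis using n by (simp add: field_simps)
qed

lemma nat_pow_dvd: "(2::int)^F dvd int e \<Longrightarrow> (2::nat)^F dvd e"
  by (metis of_nat_dvd_iff of_nat_numeral of_nat_power)

lemma lower:
  assumes n: "2 \<le> n" and ke: "killer n e"
  shows "2^(Fv n) dvd e"
proof -
  define a0 where "a0 = {1..<n}"
  have a0: "a0 \<subseteq> {..<n}" "0 \<notin> a0" "0 < n" using n by (auto simp: a0_def)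
  have dz: "delta a0 0 \<in> zvecs n"
    using a0 by (auto simp: zvecs_def delta_def cube_verts_def)
  have tors: "delta a0 0 \<in> sandpile_torsion n"
    unfolding sandpile_torsion_def using dz estar_edges[OF n a0(1) a0(3) a0(2)] estar_pos[of n]
    by (auto intro!: exI[of _ "int (estar n)"])
  hence "(\<lambda>u. int e * delta a0 0 u) \<in> lap_image n" using ke by (simp add: killer_def)
  then obtain c where c: "\<forall>x\<in>cube_verts n. of_int (int e) * psi n a0 0 x / 2^n + c \<in> \<int>"
    using edge_kill_conv[OF n a0(1) a0(3) a0(2)] by blast
  have w0: "wt n a0 0 {} = 0" "wt n a0 0 {0} = 0"
    unfolding wt_def a0_def by (auto intro!: arg_cong[where f=card, of _ "{}", simplified])
  have wk: "wt n a0 0 {1..k} = k" if "k < n" for k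
  proof -
    have "{i \<in> {..<n} - {0}. (i \<in> {1..k}) = (i \<in> a0)} = {1..k}" using that by (auto simp: a0_def)
    thus ?thesis by (simp add: wt_def)
  qed
  have hA: "of_nat e * E n 0 / 2^n + c \<in> \<int>"
    using c[rule_format, of "{}"] w0 by (simp add: psi_def cube_verts_def)
  have hB: "- (of_nat e * E n 0 / 2^n) + c \<in> \<int>"
    using c[rule_format, of "{0}"] w0 a0 by (simp add: psi_def cube_verts_def)
  have hk: "of_nat e * E n k / 2^n + c \<in> \<int>" if "k < n" for k
  proof -
    have "{1..k} \<in> cube_verts n" using that by (auto simp: cube_verts_def)
    thus ?thesis using c[rule_format, of "{1..k}"] wk[OF that] by (simp add: psi_def)
  qed
  have Fge: "(2::nat)^(mult2 n + n - 1) dvd e"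
  proof -
    have "(of_nat e * E n 0 / 2^n + c) - (- (of_nat e * E n 0 / 2^n) + c) \<in> \<int>"
      using hA hB by (rule Ints_diff)
    hence "2 * (of_nat e * E n 0 / 2^n) \<in> \<int>" by simp
    then obtain t where t: "2 * (of_nat e * E n 0 / 2^n) = (of_int t :: rat)" by (auto elim: Ints_cases)
    obtain m where m: "n = Suc m" using n by (cases n) auto
    have "2 * (of_nat e * E n 0 / 2^n) = (of_nat e / (of_nat n * 2^m) :: rat)"
      using E0_val[OF n] unfolding m by simp
    hence "of_nat e / (of_nat n * 2^m) = (of_int t :: rat)" using t by simp
    moreover have "(of_nat n * 2^m :: rat) \<noteq> 0" using n by simp
    ultimately have "(of_nat e :: rat) = of_int t * (of_nat n * 2^m)" by (simp add: divide_eq_eq)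
    hence "(of_nat e :: rat) = of_int t * of_nat n * 2^m" by (simp add: mult.assoc)
    hence "(of_int (int e) :: rat) = of_int (t * int n * 2^m)" by simp
    hence "int e = t * int n * 2^m" by (simp only: of_int_eq_iff)
    hence "int n * 2^m dvd int e" by simp
    moreover have "(2::int)^(mult2 n) dvd int n"
      using int_dvd_pow[OF multiplicity_dvd[of 2 n]] .
    ultimately have "(2::int)^(mult2 n) * 2^m dvd int e" by (meson dvd_trans mult_dvd_mono dvd_refl)
    hence "(2::int)^(mult2 n + m) dvd int e" by (simp add: power_add)
    thus ?thesis using nat_pow_dvd m by simp
  qed
  show ?thesis
  proof (cases "Fv n = mult2 n + n - 1")
    case True thus ?thesis using Fge by simp
  next
    case False
    hence c0: "mult2 n + n - 1 < Fv n" using Fv_ge2[of n] by simp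
    obtain k where k: "1 \<le> k" "k < n" "mult2 (n - k) + (n - k) = Fv n"
      and lt: "\<And>i. 1 \<le> i \<Longrightarrow> i < k \<Longrightarrow> mult2 (n - i) + (n - i) < Fv n"
      using exists_k[OF n c0] by blast
    have kle: "k \<le> n - 1" using k by simp
    define X where "X = Zs n k - Zs n 0"
    have "(of_nat e * E n k / 2^n + c) - (of_nat e * E n 0 / 2^n + c) \<in> \<int>"
      using hk[OF k(2)] hA by (rule Ints_diff)
    moreover have "(of_nat e * E n k / 2^n + c) - (of_nat e * E n 0 / 2^n + c)
        = of_nat e * of_int X / (of_nat (fact n) * 2^n)"
    proof -
      have fnz: "(of_nat (fact n) :: rat) \<noteq> 0" by simp
      have Ek: "E n k = of_int (Zs n k) / of_nat (fact n)" 
        using E_Z[of n k] n kle fnz by (simp add: eq_divide_eq)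
      have E0: "E n 0 = of_int (Zs n 0) / of_nat (fact n)"
        using E_Z[of n 0] n fnz by (simp add: eq_divide_eq)
      show ?thesis unfolding Ek E0 X_def using fnz by (simp add: field_simps)
    qed
    ultimately obtain t where t: "of_nat e * of_int X / (of_nat (fact n) * 2^n) = (of_int t :: rat)"
      by (auto elim: Ints_cases)
    have "(of_nat (fact n) :: rat) = 2^(vv n) * of_nat (Dodd n)"
      using arg_cong[OF fact_split[of n], of "of_nat :: nat \<Rightarrow> rat"] by simp
    also have "(2::rat)^(vv n) * of_nat (Dodd n) * 2^n = of_nat (Dodd n) * 2^(sv n) * 2^(Fv n)"
      using sv_eq[OF n] by (simp add: power_add[symmetric] algebra_simps)
    finally have fe: "(of_nat (fact n) :: rat) * 2^n = of_nat (Dodd n) * 2^(sv n) * 2^(Fv n)" .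
    have "(of_nat e * of_int X :: rat) = of_int t * (of_nat (Dodd n) * 2^(sv n) * 2^(Fv n))"
      using t fe by (simp add: field_simps)
    hence "(of_int (int e * X) :: rat) = of_int (t * (int (Dodd n) * 2^(sv n) * 2^(Fv n)))" by simp
    hence eX: "int e * X = t * (int (Dodd n) * 2^(sv n) * 2^(Fv n))" by (simp only: of_int_eq_iff)
    obtain X' where X': "X = 2^(sv n) * X'" using U1[OF n kle] unfolding X_def[symmetric] by (auto elim: dvdE)
    have odd: "\<not> 2 dvd X'"
    proof
      assume "2 dvd X'"
      hence "(2::int)^(Suc (sv n)) dvd X" unfolding X' by (simp add: mult_dvd_mono)
      thus False using Lk[OF n k lt c0] unfolding X_def by simp
    qed
    have "int e * X' = t * int (Dodd n) * 2^(Fv n)"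
      using eX unfolding X' by (simp add: algebra_simps)
    hence "(2::int)^(Fv n) dvd int e * X'" by simp
    moreover have "coprime ((2::int)^(Fv n)) X'" using odd by simp
    ultimately have "(2::int)^(Fv n) dvd int e" using coprime_dvd_mult_left_iff by blast
    thus ?thesis by (rule nat_pow_dvd)
  qed
qed

theorem mainTheorem3:
  fixes n :: nat
  assumes "n \<ge> 2"
  shows "multiplicity (2::nat) (sandpile_exponent n) =
    max (Max {multiplicity (2::nat) x + x | x. 1 \<le> x \<and> x < n})
        (multiplicity (2::nat) n + n - 1)"
proof -
  have n: "2 \<le> n" using assms by simp
  have ex: "sandpile_exponent n = (LEAST e. e > 0 \<and> killer n e)"
    unfolding sandpile_exponent_def killer_def ..
  define e0 where "e0 = sandpile_exponent n"
  have P: "e0 > 0 \<and> killer n e0" unfolding e0_def ex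
    by (rule LeastI[of _ "estar n"]) (use estar_pos killer_estar[OF n] in auto)
  have dv: "e0 dvd estar n"
  proof (rule ccontr)
    assume nd: "\<not> e0 dvd estar n"
    define r where "r = estar n mod e0"
    have rpos: "r > 0" using nd by (simp add: r_def dvd_eq_mod_eq_0)
    have rlt: "r < e0" using P by (simp add: r_def)
    have "killer n r"
      unfolding killer_def
    proof
      fix v assume v: "v \<in> sandpile_torsion n"
      have a: "(\<lambda>u. int (estar n) * v u) \<in> lap_image n" using killer_estar[OF n] v by (simp add: killer_def)
      have b0: "(\<lambda>u. int e0 * v u) \<in> lap_image n" using P v by (simp add: killer_def)
      have b: "(\<lambda>u. int (estar n div e0) * (int e0 * v u)) \<in> lap_image n" using b0 by (rule image_smult)
      have "(\<lambda>u. int (estar n) * v u - int (estar n div e0) * (int e0 * v u)) \<in> lap_image n"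
        using image_diff[OF a b] .
      moreover have "int r = int (estar n) - int (estar n div e0) * int e0"
      proof -
        have "estar n div e0 * e0 + r = estar n" unfolding r_def by (rule div_mult_mod_eq)
        hence "int (estar n div e0) * int e0 + int r = int (estar n)" by (metis of_nat_add of_nat_mult)
        thus ?thesis by simp
      qed
      moreover have "(\<lambda>u. int (estar n) * v u - int (estar n div e0) * (int e0 * v u)) = (\<lambda>u. (int (estar n) - int (estar n div e0) * int e0) * v u)"
        by (simp add: fun_eq_iff algebra_simps)
      ultimately show "(\<lambda>u. int r * v u) \<in> lap_image n" by simp
    qed
    hence "sandpile_exponent n \<le> r" unfolding ex using rpos by (intro Least_le) simp
    thus False using rlt unfolding e0_def by simp
  qed
  have le: "mult2 e0 \<le> Fv n"
    using dvd_imp_multiplicity_le[OF dv, of 2] estar_pos[of n] mult_estar[of n] by simp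
  have "2^(Fv n) dvd e0" using lower[OF n] P by simp
  hence ge: "Fv n \<le> mult2 e0"
    using P by (subst (asm) power_dvd_iff_le_multiplicity) auto
  have "mult2 e0 = Fv n" using le ge by (rule antisym)
  thus ?thesis unfolding e0_def Fv_def .
qed

end
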